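(* Let $t \geq 1$ be an integer, let $\mathcal{A}_1, \dots, \mathcal{A}_k$ be cross-$t$-intersecting families of finite sets, and let $\mathcal{A} = \bigcup_{i=1}^k \mathcal{A}_i$. Then (i) $\mathcal{A}^{t,+} = \bigcup_{i=1}^k \mathcal{A}_i^{t,+}$; (ii) $\mathcal{A}^{t,-} = \bigcup_{i=1}^k \mathcal{A}_i^{t,-}$; (iii) $|\mathcal{A}^{t,-}| = \sum_{i=1}^k |\mathcal{A}_i^{t,-}|$.
   Context: Families $\mathcal{A}_1, \dots, \mathcal{A}_k$ (not necessarily distinct or non-empty) are cross-$t$-intersecting if for all $i \neq j$ in $\{1,\dots,k\}$, $|A \cap B| \geq t$ for every $A \in \mathcal{A}_i$ and $B \in \mathcal{A}_j$. For a family $\mathcal{B}$, $\mathcal{B}^{t,+} = \{B \in \mathcal{B} : |B \cap C| \geq t \text{ for all } C \in \mathcal{B} \text{ with } C \neq B\}$ and $\mathcal{B}^{t,-} = \mathcal{B} \setminus \mathcal{B}^{t,+}$. *)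

theory Defs
  imports Main
begin

definition cross_t_intersecting :: "nat \<Rightarrow> nat \<Rightarrow> (nat \<Rightarrow> 'a set set) \<Rightarrow> bool" where
  "cross_t_intersecting t k F \<longleftrightarrow>
     (\<forall>i\<in>{1..k}. \<forall>j\<in>{1..k}. i \<noteq> j \<longrightarrow> (\<forall>A\<in>F i. \<forall>B\<in>F j. t \<le> card (A \<inter> B)))"

definition tplus :: "nat \<Rightarrow> 'a set set \<Rightarrow> 'a set set" where
  "tplus t \<B> = {B \<in> \<B>. \<forall>C\<in>\<B>. C \<noteq> B \<longrightarrow> t \<le> card (B \<inter> C)}"

definition tminus :: "nat \<Rightarrow> 'a set set \<Rightarrow> 'a set set" where
  "tminus t \<B> = \<B> - tplus t \<B>"

end

theory Submission
  imports Defs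
begin

theorem lemma2p1:
  fixes t k :: nat and F :: "nat \<Rightarrow> 'a set set"
  assumes "t \<ge> 1"
    and "\<forall>i\<in>{1..k}. finite (F i)"
    and "\<forall>i\<in>{1..k}. \<forall>A\<in>F i. finite A"
    and "cross_t_intersecting t k F"
  shows "tplus t (\<Union>i\<in>{1..k}. F i) = (\<Union>i\<in>{1..k}. tplus t (F i)) \<and>
         tminus t (\<Union>i\<in>{1..k}. F i) = (\<Union>i\<in>{1..k}. tminus t (F i)) \<and>
         card (tminus t (\<Union>i\<in>{1..k}. F i)) = (\<Sum>i\<in>{1..k}. card (tminus t (F i)))"
proof -
  have cr: "\<And>i j A B. i\<in>{1..k} \<Longrightarrow> j\<in>{1..k} \<Longrightarrow> i \<noteq> j \<Longrightarrow> A \<in> F i \<Longrightarrow> B \<in> F j \<Longrightarrow> t \<le> card (A \<inter> B)"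
    using assms(4) unfolding cross_t_intersecting_def by blast
  have P: "tplus t (\<Union>i\<in>{1..k}. F i) = (\<Union>i\<in>{1..k}. tplus t (F i))"
  proof
    show "tplus t (\<Union>i\<in>{1..k}. F i) \<subseteq> (\<Union>i\<in>{1..k}. tplus t (F i))"
      unfolding tplus_def by blast
  next
    show "(\<Union>i\<in>{1..k}. tplus t (F i)) \<subseteq> tplus t (\<Union>i\<in>{1..k}. F i)"
    proof
      fix B assume "B \<in> (\<Union>i\<in>{1..k}. tplus t (F i))"
      then obtain i where i: "i \<in> {1..k}" "B \<in> F i" "\<forall>C\<in>F i. C \<noteq> B \<longrightarrow> t \<le> card (B \<inter> C)"
        unfolding tplus_def by blast
      have "\<forall>C\<in>(\<Union>i\<in>{1..k}. F i). C \<noteq> B \<longrightarrow> t \<le> card (B \<inter> C)"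
      proof (intro ballI impI)
        fix C assume "C \<in> (\<Union>i\<in>{1..k}. F i)" "C \<noteq> B"
        then obtain j where j: "j \<in> {1..k}" "C \<in> F j" by blast
        show "t \<le> card (B \<inter> C)"
          using i j cr[of i j B C] \<open>C \<noteq> B\<close> by (cases "i = j") auto
      qed
      then show "B \<in> tplus t (\<Union>i\<in>{1..k}. F i)" using i unfolding tplus_def by blast
    qed
  qed
  have key: "\<And>i j B. i\<in>{1..k} \<Longrightarrow> j\<in>{1..k} \<Longrightarrow> i \<noteq> j \<Longrightarrow> B \<in> tminus t (F i) \<Longrightarrow> B \<notin> F j"
  proof
    fix i j B assume h: "i\<in>{1..k}" "j\<in>{1..k}" "i \<noteq> j" "B \<in> tminus t (F i)" "B \<in> F j"
    then obtain C where C: "C \<in> F i" "C \<noteq> B" "\<not> t \<le> card (B \<inter> C)"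
      unfolding tminus_def tplus_def by blast
    show False using cr[of j i B C] h C by auto
  qed
  have M: "tminus t (\<Union>i\<in>{1..k}. F i) = (\<Union>i\<in>{1..k}. tminus t (F i))"
  proof
    show "tminus t (\<Union>i\<in>{1..k}. F i) \<subseteq> (\<Union>i\<in>{1..k}. tminus t (F i))"
      unfolding tminus_def using P by (auto simp: tplus_def)
  next
    show "(\<Union>i\<in>{1..k}. tminus t (F i)) \<subseteq> tminus t (\<Union>i\<in>{1..k}. F i)"
    proof
      fix B assume "B \<in> (\<Union>i\<in>{1..k}. tminus t (F i))"
      then obtain i where i: "i \<in> {1..k}" "B \<in> tminus t (F i)" by blast
      have "B \<notin> (\<Union>i\<in>{1..k}. tplus t (F i))"
      proof
        assume "B \<in> (\<Union>i\<in>{1..k}. tplus t (F i))"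
        then obtain j where j: "j \<in> {1..k}" "B \<in> tplus t (F j)" by blast
        show False
        proof (cases "i = j")
          case True then show ?thesis using i j unfolding tminus_def by blast
        next
          case False then show ?thesis using key[of i j B] i j unfolding tplus_def by blast
        qed
      qed
      then show "B \<in> tminus t (\<Union>i\<in>{1..k}. F i)"
        using i P unfolding tminus_def by blast
    qed
  qed
  have "card (\<Union>i\<in>{1..k}. tminus t (F i)) = (\<Sum>i\<in>{1..k}. card (tminus t (F i)))"
  proof (rule card_UN_disjoint)
    show "finite {1..k}" by simp
    show "\<forall>i\<in>{1..k}. finite (tminus t (F i))"
      using assms(2) unfolding tminus_def by auto
    show "\<forall>i\<in>{1..k}. \<forall>j\<in>{1..k}. i \<noteq> j \<longrightarrow> tminus t (F i) \<inter> tminus t (F j) = {}"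
      using key unfolding tminus_def by (meson Diff_iff disjoint_iff)
  qed
  then show ?thesis using P M by simp
qed

end
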